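(* Consider the setting described in the context and assume $D>2$. For $t\ge 1$ let $\mathcal{I}_0(t)=\bigcup_{m=0}^{t-1}\mathcal{F}_0(m)$. Then for every $t\ge1$, $a_i(t)\le 2N$ for all $i\in\mathcal{I}_0(t)$.
   Context: $G=(V,E)$ is a finite connected undirected graph with node set $V=\{0,\dots,N-1\}$; $\mathcal{N}(i)$ denotes the set of neighbours of $i$. Every edge has length $1$, $d_{ij}$ is the hop distance between $i$ and $j$, and $\mathcal{F}_k(m)=\{i\in V : d_{ik}=m\}$. Every node carries value $v_i=1$. The source set is $S(t)=\{D-1\}$ for $t\le 0$ and $S(t)=\{0\}$ for $t\ge 1$. The integer $D$ satisfies $\max_{i\in V}d_{i0}=D-1$, and nodes are labelled so that $0,1,\dots,D-1$ is a path in which node $i$ is a neighbour of $i+1$ with $d_{0,i}=i$ for $0\le i\le D-1$. The algorithm updates, for $t\ge1$: $\hat d_i(t)=0$ if $i\in S(t)$, and $\hat d_i(t)=\min_{j\in\mathcal{N}(i)}\{\hat d_j(t-1)+1\}$ otherwise; $c_i(t)=i$ if $i\in S(t)$, and otherwise $c_i(t)$ is a minimizer $j\in\mathcal{N}(i)$ of $\hat d_j(t-1)+1$; $C_i(t)=\{j : c_j(t-1)=i \text{ and } \hat d_j(t-1)=\hat d_i(t)+1\}$; $a_i(t)=\sum_{j\in C_i(t)}a_j(t-1)+v_i$. Initial values $(\hat d_i(0),c_i(0),a_i(0))$ are steady-state values of these recursions when the source set is constantly $\{D-1\}$; in particular $\hat d_i(0)=m$ for all $i\in\mathcal{F}_{D-1}(m)$,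 and for every integer $m$, $\sum_{i\in\mathcal{F}_{D-1}(m)}a_i(0)\le N$. *)

theory Defs
  imports Main
begin

fun walk :: "(nat \<Rightarrow> nat \<Rightarrow> bool) \<Rightarrow> nat \<Rightarrow> nat \<Rightarrow> nat \<Rightarrow> bool" where
  "walk E 0 i j = (i = j)"
| "walk E (Suc n) i j = (\<exists>k. E i k \<and> walk E n k j)"

definition hopdist :: "(nat \<Rightarrow> nat \<Rightarrow> bool) \<Rightarrow> nat \<Rightarrow> nat \<Rightarrow> nat" where
  "hopdist E i j = (LEAST n. walk E n i j)"

definition nbrs :: "(nat \<Rightarrow> nat \<Rightarrow> bool) \<Rightarrow> nat \<Rightarrow> nat set" where
  "nbrs E i = {j. E i j}"

definition conn_graph :: "nat \<Rightarrow> (nat \<Rightarrow> nat \<Rightarrow> bool) \<Rightarrow> bool" where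
  "conn_graph N E \<longleftrightarrow>
     (\<forall>i j. E i j \<longrightarrow> i < N \<and> j < N) \<and>
     (\<forall>i j. E i j \<longleftrightarrow> E j i) \<and>
     (\<forall>i. \<not> E i i) \<and>
     (\<forall>i<N. \<forall>j<N. \<exists>n. walk E n i j)"

definition dupd :: "(nat \<Rightarrow> nat \<Rightarrow> bool) \<Rightarrow> (nat \<Rightarrow> nat) \<Rightarrow> nat \<Rightarrow> nat" where
  "dupd E dprev i = Min ((\<lambda>j. dprev j + 1) ` nbrs E i)"

text \<open>Children set C_i: nodes j (in V) with c_j(prev) = i and dhat_j(prev) = dhat_i(now) + 1.\<close>
definition Cset :: "nat \<Rightarrow> (nat \<Rightarrow> nat) \<Rightarrow> (nat \<Rightarrow> nat) \<Rightarrow> nat \<Rightarrow> nat \<Rightarrow> nat set" where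
  "Cset N cprev dprev di i = {j. j < N \<and> cprev j = i \<and> dprev j = di + 1}"

end

theory Submission
  imports Defs
begin

lemma walk_len:
  assumes "conn_graph N E" "x < N" "y < N"
  shows "walk E (hopdist E x y) x y"
proof -
  from assms obtain n where "walk E n x y" unfolding conn_graph_def by blast
  then show ?thesis unfolding hopdist_def by (rule LeastI)
qed

lemma hop_le: "walk E n x y \<Longrightarrow> hopdist E x y \<le> n"
  unfolding hopdist_def by (rule Least_le)

lemma hop_self: "hopdist E x x = 0"
  using hop_le[of E 0 x x] by simp

lemma hop_zero:
  assumes "conn_graph N E" "x < N" "y < N" "hopdist E x y = 0"
  shows "x = y"
  using walk_len[OF assms(1-3)] assms(4) by simp

lemma hop_edge:
  assumes "conn_graph N E" "E x j" "y < N"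
  shows "hopdist E x y \<le> hopdist E j y + 1"
proof -
  have "j < N" using assms unfolding conn_graph_def by blast
  then have "walk E (hopdist E j y) j y" using walk_len assms by blast
  then have "walk E (Suc (hopdist E j y)) x y" using assms(2) by auto
  then show ?thesis using hop_le by fastforce
qed

lemma hop_step:
  assumes "conn_graph N E" "x < N" "y < N" "x \<noteq> y"
  shows "\<exists>j. E x j \<and> hopdist E j y + 1 \<le> hopdist E x y"
proof -
  have w: "walk E (hopdist E x y) x y" using walk_len assms by blast
  have "hopdist E x y \<noteq> 0" using hop_zero assms by blast
  then obtain k where k: "hopdist E x y = Suc k" using not0_implies_Suc by blast
  with w obtain j where "E x j" "walk E k j y" by auto
  then show ?thesis using hop_le k by fastforce
qed

lemma nbrs_finite:
  assumes "conn_graph N E"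
  shows "finite (nbrs E x)"
proof -
  have "nbrs E x \<subseteq> {..<N}" using assms unfolding conn_graph_def nbrs_def by auto
  then show ?thesis using finite_subset by blast
qed

lemma dupd_le:
  assumes "conn_graph N E" "E x j"
  shows "dupd E f x \<le> f j + 1"
  unfolding dupd_def
  using assms nbrs_finite[OF assms(1)] by (intro Min_le) (auto simp: nbrs_def)

lemma dupd_ge:
  assumes "conn_graph N E" "nbrs E x \<noteq> {}" "\<forall>j\<in>nbrs E x. c \<le> f j + 1"
  shows "c \<le> dupd E f x"
  unfolding dupd_def
  using assms nbrs_finite[OF assms(1)] by (subst Min_ge_iff) auto

lemma dupd_mono:
  assumes "conn_graph N E" "nbrs E x \<noteq> {}" "\<forall>j\<in>nbrs E x. f j \<le> g j"
  shows "dupd E f x \<le> dupd E g x"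
proof (rule dupd_ge[OF assms(1,2)], intro ballI)
  fix j assume j: "j \<in> nbrs E x"
  then have "dupd E f x \<le> f j + 1" using dupd_le[OF assms(1)] by (auto simp: nbrs_def)
  then show "dupd E f x \<le> g j + 1" using assms(3) j by fastforce
qed

lemma layer:
  fixes aN aP cP dP dN :: "nat \<Rightarrow> nat"
  assumes "X \<subseteq> {..<N}"
    and "\<forall>x\<in>X. aN x = (\<Sum>j\<in>Cset N cP dP (dN x) x. aP j) + 1"
  shows "(\<Sum>x\<in>X. aN x) = card X + (\<Sum>j\<in>{j. j < N \<and> cP j \<in> X \<and> dP j = dN (cP j) + 1}. aP j)"
proof -
  have fX: "finite X" using assms(1) finite_subset by blast
  have fC: "\<forall>x\<in>X. finite (Cset N cP dP (dN x) x)" unfolding Cset_def by auto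
  have dj: "\<forall>x\<in>X. \<forall>y\<in>X. x \<noteq> y \<longrightarrow> Cset N cP dP (dN x) x \<inter> Cset N cP dP (dN y) y = {}"
    unfolding Cset_def by auto
  have U: "(\<Union>x\<in>X. Cset N cP dP (dN x) x) = {j. j < N \<and> cP j \<in> X \<and> dP j = dN (cP j) + 1}"
    unfolding Cset_def by auto
  have "(\<Sum>x\<in>X. aN x) = (\<Sum>x\<in>X. (\<Sum>j\<in>Cset N cP dP (dN x) x. aP j) + 1)"
    using assms(2) by simp
  also have "\<dots> = (\<Sum>x\<in>X. (\<Sum>j\<in>Cset N cP dP (dN x) x. aP j)) + card X"
    by (simp add: sum.distrib del: add_Suc_right Suc_eq_plus1 add.commute)
  also have "(\<Sum>x\<in>X. (\<Sum>j\<in>Cset N cP dP (dN x) x. aP j)) = (\<Sum>j\<in>(\<Union>x\<in>X. Cset N cP dP (dN x) x). aP j)"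
    using sum.UNION_disjoint[OF fX fC dj, of aP] by simp
  finally show ?thesis using U by simp
qed


primrec Zs :: "nat \<Rightarrow> (nat \<Rightarrow> nat \<Rightarrow> nat) \<Rightarrow> (nat \<Rightarrow> nat \<Rightarrow> nat) \<Rightarrow> nat \<Rightarrow> nat \<Rightarrow> nat \<Rightarrow> nat set" where
  "Zs N c dh t i 0 = {i}"
| "Zs N c dh t i (Suc r) = {j. j < N \<and> c (t - Suc r) j \<in> Zs N c dh t i r \<and>
      dh (t - Suc r) j = dh (t - r) (c (t - Suc r) j) + 1}"


theorem lemma5:
  fixes N D :: nat
    and E :: "nat \<Rightarrow> nat \<Rightarrow> bool"
    and dh :: "nat \<Rightarrow> nat \<Rightarrow> nat"   \<comment> \<open>dh t i = hat d_i(t)\<close>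
    and c :: "nat \<Rightarrow> nat \<Rightarrow> nat"    \<comment> \<open>c t i = c_i(t)\<close>
    and a :: "nat \<Rightarrow> nat \<Rightarrow> nat"    \<comment> \<open>a t i = a_i(t)\<close>
  assumes graph: "conn_graph N E"
    and D_gt: "D > 2"
    and D_max: "(MAX i\<in>{0..<N}. hopdist E i 0) = D - 1"
    and path_nodes: "\<forall>i\<le>D - 1. i < N \<and> hopdist E 0 i = i"
    and path_edges: "\<forall>i<D - 1. E i (i + 1)"
    \<comment> \<open>initial values: steady state for constant source set {D-1}\<close>
    and init_d: "\<forall>i<N. dh 0 i = (if i = D - 1 then 0 else dupd E (dh 0) i)"
    and init_c: "\<forall>i<N. if i = D - 1 then c 0 i = i
                   else c 0 i \<in> nbrs E i \<and> dh 0 (c 0 i) + 1 = dupd E (dh 0) i"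
    and init_a: "\<forall>i<N. a 0 i = (\<Sum>j\<in>Cset N (c 0) (dh 0) (dh 0 i) i. a 0 j) + 1"
    and init_dist: "\<forall>i<N. dh 0 i = hopdist E i (D - 1)"
    and init_shell: "\<forall>m::nat. (\<Sum>i\<in>{i. i < N \<and> hopdist E i (D - 1) = m}. a 0 i) \<le> N"
    \<comment> \<open>updates for t \<ge> 1 with source set {0}\<close>
    and upd_d: "\<forall>t\<ge>1. \<forall>i<N. dh t i = (if i = 0 then 0 else dupd E (dh (t - 1)) i)"
    and upd_c: "\<forall>t\<ge>1. \<forall>i<N. if i = 0 then c t i = i
                   else c t i \<in> nbrs E i \<and> dh (t - 1) (c t i) + 1 = dupd E (dh (t - 1)) i"
    and upd_a: "\<forall>t\<ge>1. \<forall>i<N.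
                 a t i = (\<Sum>j\<in>Cset N (c (t - 1)) (dh (t - 1)) (dh t i) i. a (t - 1) j) + 1"
  shows "\<forall>t\<ge>1. \<forall>i<N. hopdist E i 0 < t \<longrightarrow> a t i \<le> 2 * N"
proof -
  define d where "d x = hopdist E x 0" for x
  have N0: "0 < N" using path_nodes by auto
  have edgeN: "\<And>x j. E x j \<Longrightarrow> x < N \<and> j < N" using graph unfolding conn_graph_def by blast
  have has_nb: "\<And>x. x < N \<Longrightarrow> x \<noteq> 0 \<Longrightarrow> nbrs E x \<noteq> {}"
    using hop_step[OF graph _ N0] unfolding nbrs_def by blast
  have d_edge: "\<And>x j. E x j \<Longrightarrow> d x \<le> d j + 1"
    unfolding d_def using hop_edge[OF graph _ N0] by blast
  have d_zero: "\<And>x. x < N \<Longrightarrow> d x = 0 \<Longrightarrow> x = 0"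
    unfolding d_def using hop_zero[OF graph _ N0] by blast
  have d0: "d 0 = 0" unfolding d_def by (rule hop_self)
  have lip0: "\<And>x j. x < N \<Longrightarrow> E x j \<Longrightarrow> dh 0 x \<le> dh 0 j + 1"
  proof -
    fix x j assume x: "x < N" and e: "E x j"
    show "dh 0 x \<le> dh 0 j + 1"
    proof (cases "x = D - 1")
      case True then show ?thesis using init_d x by simp
    next
      case False
      then have "dh 0 x = dupd E (dh 0) x" using init_d x by simp
      then show ?thesis using dupd_le[OF graph e] by simp
    qed
  qed
  have dstep: "\<And>u x. 1 \<le> u \<Longrightarrow> x < N \<Longrightarrow> x \<noteq> 0 \<Longrightarrow> dh u x = dupd E (dh (u - 1)) x"
    using upd_d by simp
  have dsrc: "\<And>u. 1 \<le> u \<Longrightarrow> dh u 0 = 0" using upd_d N0 by simp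
  have Lb: "\<forall>x<N. min (d x) u \<le> dh u x" for u
  proof (induction u)
    case 0 then show ?case by simp
  next
    case (Suc u)
    show ?case
    proof (intro allI impI)
      fix x assume x: "x < N"
      show "min (d x) (Suc u) \<le> dh (Suc u) x"
      proof (cases "x = 0")
        case True then show ?thesis using d0 by simp
      next
        case False
        have "min (d x) (Suc u) \<le> dupd E (dh u) x"
        proof (rule dupd_ge[OF graph has_nb[OF x False]], intro ballI)
          fix j assume "j \<in> nbrs E x"
          then have e: "E x j" by (simp add: nbrs_def)
          then have "min (d j) u \<le> dh u j" using Suc edgeN by blast
          then show "min (d x) (Suc u) \<le> dh u j + 1" using d_edge[OF e] by linarith
        qed
        then show ?thesis using dstep[of "Suc u" x] x False by simp
      qed
    qed
  qed
  have Ub: "1 \<le> u \<longrightarrow> (\<forall>x<N. d x < u \<longrightarrow> dh u x \<le> d x)" for u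
  proof (induction u)
    case 0 then show ?case by simp
  next
    case (Suc u)
    show ?case
    proof (intro impI allI)
      fix x assume x: "x < N" and dx: "d x < Suc u"
      show "dh (Suc u) x \<le> d x"
      proof (cases "x = 0")
        case True then show ?thesis using dsrc by simp
      next
        case False
        obtain j where e: "E x j" and dj: "d j + 1 \<le> d x"
          using hop_step[OF graph x N0 False] unfolding d_def by blast
        have "u \<ge> 1" using dj dx by linarith
        then have "dh u j \<le> d j" using Suc edgeN[OF e] dj dx by auto
        then have "dupd E (dh u) x \<le> d x" using dupd_le[OF graph e, of "dh u"] dj by linarith
        then show ?thesis using dstep[of "Suc u" x] x False by simp
      qed
    qed
  qed
  have G2: "\<And>u x. 1 \<le> u \<Longrightarrow> x < N \<Longrightarrow> d x < u \<Longrightarrow> dh u x = d x"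
  proof -
    fix u x assume "1 \<le> u" "x < N" "d x < u"
    then show "dh u x = d x" using Lb[of u] Ub[of u] by fastforce
  qed
  have G1: "\<forall>x<N. 1 \<le> v \<longrightarrow> v \<le> d x \<longrightarrow> dh (v - 1) x \<le> dh v x" for v
  proof (induction v)
    case 0 then show ?case by simp
  next
    case (Suc v)
    show ?case
    proof (intro allI impI)
      fix x assume x: "x < N" and vx: "Suc v \<le> d x"
      then have x0: "x \<noteq> 0" using d0 by (metis not_less_eq_eq zero_le)
      show "dh (Suc v - 1) x \<le> dh (Suc v) x"
      proof (cases "v = 0")
        case True
        have "dh 0 x \<le> dupd E (dh 0) x"
          using dupd_ge[OF graph has_nb[OF x x0]] lip0[OF x] by (auto simp: nbrs_def)
        then show ?thesis using True dstep[of 1 x] x x0 by simp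
      next
        case False
        have "dupd E (dh (v - 1)) x \<le> dupd E (dh v) x"
        proof (rule dupd_mono[OF graph has_nb[OF x x0]], intro ballI)
          fix j assume "j \<in> nbrs E x"
          then have e: "E x j" by (simp add: nbrs_def)
          have "v \<le> d j" using d_edge[OF e] vx by linarith
          then show "dh (v - 1) j \<le> dh v j" using Suc edgeN[OF e] False by auto
        qed
        then show ?thesis using dstep[of v x] dstep[of "Suc v" x] x x0 False by simp
      qed
    qed
  qed
  have G1': "\<And>x v u. x < N \<Longrightarrow> v \<le> u \<Longrightarrow> u \<le> d x \<Longrightarrow> dh v x \<le> dh u x"
  proof -
    fix x v u assume x: "x < N" and vu: "v \<le> u" and ud: "u \<le> d x"
    have "\<forall>k. v + k \<le> d x \<longrightarrow> dh v x \<le> dh (v + k) x"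
    proof
      fix k show "v + k \<le> d x \<longrightarrow> dh v x \<le> dh (v + k) x"
      proof (induction k)
        case 0 then show ?case by simp
      next
        case (Suc k)
        show ?case
        proof
          assume h: "v + Suc k \<le> d x"
          have "dh (v + Suc k - 1) x \<le> dh (v + Suc k) x" using G1[of "v + Suc k"] x h by simp
          then show "dh v x \<le> dh (v + Suc k) x" using Suc h by simp
        qed
      qed
    qed
    then show "dh v x \<le> dh u x" using vu ud by (metis le_add_diff_inverse)
  qed
  define Bd where "Bd = Suc (Max (dh 0 ` {..<N}))"
  have bd: "\<And>y. y < N \<Longrightarrow> dh 0 y < Bd"
    unfolding Bd_def by (simp add: le_imp_less_Suc)
  have lev0: "\<forall>M X. Bd - M = K \<longrightarrow> X \<subseteq> {y. y < N \<and> dh 0 y = M} \<longrightarrow>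
      (\<Sum>x\<in>X. a 0 x) \<le> card {y. y < N \<and> M \<le> dh 0 y}" for K
  proof (induction K)
    case 0
    show ?case
    proof (intro allI impI)
      fix M and X :: "nat set" assume "Bd - M = 0" "X \<subseteq> {y. y < N \<and> dh 0 y = M}"
      then have "X = {}" using bd by fastforce
      then show "(\<Sum>x\<in>X. a 0 x) \<le> card {y. y < N \<and> M \<le> dh 0 y}" by simp
    qed
  next
    case (Suc K)
    show ?case
    proof (intro allI impI)
      fix M and X :: "nat set" assume BM: "Bd - M = Suc K" and XS: "X \<subseteq> {y. y < N \<and> dh 0 y = M}"
      define Ch where "Ch = {j. j < N \<and> c 0 j \<in> X \<and> dh 0 j = dh 0 (c 0 j) + 1}"
      have "(\<Sum>x\<in>X. a 0 x) = card X + (\<Sum>j\<in>Ch. a 0 j)"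
        unfolding Ch_def using XS init_a by (intro layer) auto
      moreover have "Ch \<subseteq> {y. y < N \<and> dh 0 y = Suc M}" unfolding Ch_def using XS by auto
      then have "(\<Sum>j\<in>Ch. a 0 j) \<le> card {y. y < N \<and> Suc M \<le> dh 0 y}"
        using Suc BM by (metis Suc_diff_Suc diff_Suc_1 zero_less_Suc zero_less_diff)
      moreover have "card X + card {y. y < N \<and> Suc M \<le> dh 0 y} \<le> card {y. y < N \<and> M \<le> dh 0 y}"
      proof -
        have "card X + card {y. y < N \<and> Suc M \<le> dh 0 y} = card (X \<union> {y. y < N \<and> Suc M \<le> dh 0 y})"
          using XS by (intro card_Un_disjoint[symmetric]) (auto intro: finite_subset)
        also have "\<dots> \<le> card {y. y < N \<and> M \<le> dh 0 y}"
          using XS by (intro card_mono) auto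
        finally show ?thesis .
      qed
      ultimately show "(\<Sum>x\<in>X. a 0 x) \<le> card {y. y < N \<and> M \<le> dh 0 y}" by linarith
    qed
  qed
  show ?thesis
  proof (intro allI impI)
    fix t i assume t1: "1 \<le> t" and iN: "i < N" and "hopdist E i 0 < t"
    define M where "M = dh t i + t"
    define Z where "Z = Zs N c dh t i"
    have Zsub: "r \<le> t \<longrightarrow> Z r \<subseteq> {x. x < N \<and> dh (t - r) x + (t - r) = M}" for r
    proof (induction r)
      case 0 then show ?case using iN unfolding Z_def M_def by simp
    next
      case (Suc r)
      show ?case
      proof
        assume rt: "Suc r \<le> t"
        have eq: "t - r = Suc (t - Suc r)" using rt by simp
        show "Z (Suc r) \<subseteq> {x. x < N \<and> dh (t - Suc r) x + (t - Suc r) = M}"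
        proof
          fix j assume "j \<in> Z (Suc r)"
          then have j: "j < N" "c (t - Suc r) j \<in> Z r"
            "dh (t - Suc r) j = dh (t - r) (c (t - Suc r) j) + 1" unfolding Z_def by auto
          then have "dh (t - r) (c (t - Suc r) j) + (t - r) = M" using Suc rt by auto
          then show "j \<in> {x. x < N \<and> dh (t - Suc r) x + (t - Suc r) = M}"
          proof -
            obtain s where ts: "t = s + Suc r" using rt by (metis le_add_diff_inverse2)
            show ?thesis using j \<open>dh (t - r) (c (t - Suc r) j) + (t - r) = M\<close> unfolding ts by simp
          qed
        qed
      qed
    qed
    have decomp: "r \<le> t \<longrightarrow> a t i = (\<Sum>q<r. card (Z q)) + (\<Sum>x\<in>Z r. a (t - r) x)" for r
    proof (induction r)
      case 0 then show ?case unfolding Z_def by simp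
    next
      case (Suc r)
      show ?case
      proof
        assume rt: "Suc r \<le> t"
        have eq: "t - r - 1 = t - Suc r" by simp
        have ZN: "Z r \<subseteq> {..<N}" using Zsub[of r] rt by auto
        have "(\<Sum>x\<in>Z r. a (t - r) x) = card (Z r) +
            (\<Sum>j\<in>{j. j < N \<and> c (t - Suc r) j \<in> Z r \<and> dh (t - Suc r) j = dh (t - r) (c (t - Suc r) j) + 1}. a (t - Suc r) j)"
        proof (rule layer[OF ZN], intro ballI)
          fix x assume "x \<in> Z r"
          then have "x < N" using ZN by auto
          then show "a (t - r) x = (\<Sum>j\<in>Cset N (c (t - Suc r)) (dh (t - Suc r)) (dh (t - r) x) x. a (t - Suc r) j) + 1"
            proof -
            have u: "1 \<le> t - r" using rt by simp
            show ?thesis using upd_a u eq \<open>x < N\<close> by simp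
          qed
        qed
        also have "{j. j < N \<and> c (t - Suc r) j \<in> Z r \<and> dh (t - Suc r) j = dh (t - r) (c (t - Suc r) j) + 1} = Z (Suc r)"
          unfolding Z_def by simp
        finally show "a t i = (\<Sum>q<Suc r. card (Z q)) + (\<Sum>x\<in>Z (Suc r). a (t - Suc r) x)"
          using Suc rt by simp
      qed
    qed
    define R where "R x = {r \<in> {..<t}. dh (t - r) x + (t - r) = M}" for x
    define ind where "ind x = (if M \<le> dh 0 x then 1 else (0::nat))" for x
    have pernode: "card (R x) + ind x \<le> 2" if x: "x < N" for x
    proof -
      define RA where "RA = {r \<in> R x. d x < t - r}"
      define RB where "RB = {r \<in> R x. t - r \<le> d x}"
      have fR: "finite (R x)" unfolding R_def by simp
      have RU: "R x = RA \<union> RB" unfolding RA_def RB_def by auto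
      have cA: "card RA \<le> 1"
      proof -
        have "\<forall>r1\<in>RA. \<forall>r2\<in>RA. r1 = r2"
        proof (intro ballI)
          fix r1 r2 assume "r1 \<in> RA" "r2 \<in> RA"
          then have h: "r1 < t" "r2 < t" "d x < t - r1" "d x < t - r2"
            "dh (t - r1) x + (t - r1) = M" "dh (t - r2) x + (t - r2) = M"
            unfolding RA_def R_def by auto
          have "dh (t - r1) x = d x" "dh (t - r2) x = d x" using G2 x h by auto
          then show "r1 = r2" using h by linarith
        qed
        moreover have "finite RA" using fR RU by simp
        ultimately show ?thesis using card_le_Suc0_iff_eq by auto
      qed
      have cB: "card RB \<le> 1"
      proof -
        have "\<forall>r1\<in>RB. \<forall>r2\<in>RB. r1 = r2"
        proof (intro ballI)
          fix r1 r2 assume "r1 \<in> RB" "r2 \<in> RB"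
          then have h: "r1 < t" "r2 < t" "t - r1 \<le> d x" "t - r2 \<le> d x"
            "dh (t - r1) x + (t - r1) = M" "dh (t - r2) x + (t - r2) = M"
            unfolding RB_def R_def by auto
          show "r1 = r2"
          proof (cases "r1 \<le> r2")
            case True
            then have "dh (t - r2) x \<le> dh (t - r1) x" using G1' x h by simp
            then show ?thesis using h True by linarith
          next
            case False
            then have "dh (t - r1) x \<le> dh (t - r2) x" using G1' x h by simp
            then show ?thesis using h False by linarith
          qed
        qed
        moreover have "finite RB" using fR RU by simp
        ultimately show ?thesis using card_le_Suc0_iff_eq by auto
      qed
      have cR: "card (R x) \<le> card RA + card RB" using RU card_Un_le by metis
      show ?thesis
      proof (cases "RB = {}")
        case True
        then show ?thesis using cR cA unfolding ind_def by simp
      next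
        case False
        then obtain r where r: "r \<in> RB" by blast
        then have h: "r < t" "t - r \<le> d x" "dh (t - r) x + (t - r) = M"
          unfolding RB_def R_def by auto
        have "dh 0 x \<le> dh (t - r) x" using G1' x h by simp
        then have "ind x = 0" unfolding ind_def using h by simp
        then show ?thesis using cR cA cB by simp
      qed
    qed
    have sumZ: "(\<Sum>q<t. card (Z q)) \<le> (\<Sum>x<N. card (R x))"
    proof -
      have "(\<Sum>q<t. card (Z q)) \<le> (\<Sum>q<t. card {x \<in> {..<N}. dh (t - q) x + (t - q) = M})"
      proof (rule sum_mono)
        fix q assume "q \<in> {..<t}"
        then have "Z q \<subseteq> {x \<in> {..<N}. dh (t - q) x + (t - q) = M}" using Zsub[of q] by auto
        then show "card (Z q) \<le> card {x \<in> {..<N}. dh (t - q) x + (t - q) = M}"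
          by (intro card_mono) auto
      qed
      also have "\<dots> = (\<Sum>q<t. \<Sum>x<N. if dh (t - q) x + (t - q) = M then 1 else 0)"
        by (simp add: sum.inter_filter[symmetric])
      also have "\<dots> = (\<Sum>x<N. \<Sum>q<t. if dh (t - q) x + (t - q) = M then 1 else 0)"
        by (rule sum.swap)
      also have "\<dots> = (\<Sum>x<N. card (R x))"
      proof (rule sum.cong[OF refl])
        fix x
        show "(\<Sum>q<t. if dh (t - q) x + (t - q) = M then 1 else 0) = card (R x)"
          unfolding R_def card_eq_sum by (rule sum.inter_filter[OF finite_lessThan, symmetric])
      qed
      finally show ?thesis .
    qed
    have Zt: "Z t \<subseteq> {y. y < N \<and> dh 0 y = M}" using Zsub[of t] by simp
    have lv: "(\<Sum>x\<in>Z t. a 0 x) \<le> card {y. y < N \<and> M \<le> dh 0 y}"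
      using lev0[of "Bd - M"] Zt by blast
    have ci: "card {y. y < N \<and> M \<le> dh 0 y} = (\<Sum>x<N. ind x)"
    proof -
      have "{y. y < N \<and> M \<le> dh 0 y} = {y \<in> {..<N}. M \<le> dh 0 y}" by auto
      then show ?thesis unfolding ind_def by (simp add: sum.inter_filter[symmetric])
    qed
    have "a t i = (\<Sum>q<t. card (Z q)) + (\<Sum>x\<in>Z t. a 0 x)" using decomp[of t] by simp
    also have "\<dots> \<le> (\<Sum>x<N. card (R x)) + (\<Sum>x<N. ind x)" using sumZ lv ci by linarith
    also have "\<dots> = (\<Sum>x<N. card (R x) + ind x)" by (simp add: sum.distrib)
    also have "\<dots> \<le> (\<Sum>x<N. 2)" by (rule sum_mono) (use pernode in auto)
    finally show "a t i \<le> 2 * N" by simp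
  qed
qed

end
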